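(* Let $\mathbf{p}$ be a list of explainable predicate constants and let $R$ be an L-rule (with respect to $\mathbf{p}$). Then the conjunction $CC$ of completeness constraints for $\mathbf{p}$ intuitionistically entails $\mathrm{tr}_l[R]\leftrightarrow\mathrm{tr}_d[R]$.
   Context: An L-rule is a causal rule $L\Leftarrow G$, where $G$ is a first-order formula without $\to$ and $L$ is a literal $p(\mathbf{t})$ or $\neg p(\mathbf{t})$ with $p\in\mathbf{p}$. For each $p\in\mathbf{p}$, $\widehat p$ is a new predicate constant of the same arity. $\mathrm{tr}_l[p(\mathbf{t})\Leftarrow G]=\widetilde\forall(\neg\neg G\to p(\mathbf{t}))$ and $\mathrm{tr}_l[\neg p(\mathbf{t})\Leftarrow G]=\widetilde\forall(\neg\neg G\to\widehat p(\mathbf{t}))$ ($\widetilde\forall$ = universal closure). Viewing the L-rule as a D-rule, $\mathrm{tr}_d[p(\mathbf{t})\Leftarrow G]=\widetilde\forall(\neg\neg G\land(\widehat p(\mathbf{t})\lor\neg\widehat p(\mathbf{t}))\to p(\mathbf{t}))$ and $\mathrm{tr}_d[\neg p(\mathbf{t})\Leftarrow G]=\widetilde\forall(\neg\neg G\land(p(\mathbf{t})\lor\neg p(\mathbf{t}))\to \widehat p(\mathbf{t}))$. $CC$ is the conjunction over $p\in\mathbf{p}$ of $\forall\mathbf{x}\neg(p(\mathbf{x})\land\widehat p(\mathbf{x}))$ and $\forall\mathbf{x}\neg(\neg p(\mathbf{x})\land\neg\widehat p(\mathbf{x}))$. Entailment is in first-order intuitionistic logic. *)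

theory Defs
  imports Main
begin

datatype 'f trm = Var nat | Fn 'f "'f trm list"

datatype ('f, 'p) fm =
    FF
  | Pred 'p "'f trm list"
  | Conj "('f, 'p) fm" "('f, 'p) fm"
  | Disj "('f, 'p) fm" "('f, 'p) fm"
  | Imp "('f, 'p) fm" "('f, 'p) fm"
  | All "('f, 'p) fm"
  | Ex "('f, 'p) fm"

definition Neg :: "('f, 'p) fm \<Rightarrow> ('f, 'p) fm" where
  "Neg A = Imp A FF"

definition TT :: "('f, 'p) fm" where
  "TT = Imp FF FF"

definition Iff :: "('f, 'p) fm \<Rightarrow> ('f, 'p) fm \<Rightarrow> ('f, 'p) fm" where
  "Iff A B = Conj (Imp A B) (Imp B A)"

primrec liftt :: "'f trm \<Rightarrow> nat \<Rightarrow> 'f trm"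
  and liftts :: "'f trm list \<Rightarrow> nat \<Rightarrow> 'f trm list" where
  "liftt (Var i) k = (if i < k then Var i else Var (Suc i))"
| "liftt (Fn f ts) k = Fn f (liftts ts k)"
| "liftts [] k = []"
| "liftts (t # ts) k = liftt t k # liftts ts k"

primrec liftf :: "('f, 'p) fm \<Rightarrow> nat \<Rightarrow> ('f, 'p) fm" where
  "liftf FF k = FF"
| "liftf (Pred p ts) k = Pred p (liftts ts k)"
| "liftf (Conj A B) k = Conj (liftf A k) (liftf B k)"
| "liftf (Disj A B) k = Disj (liftf A k) (liftf B k)"
| "liftf (Imp A B) k = Imp (liftf A k) (liftf B k)"
| "liftf (All A) k = All (liftf A (Suc k))"
| "liftf (Ex A) k = Ex (liftf A (Suc k))"

primrec substt :: "'f trm \<Rightarrow> nat \<Rightarrow> 'f trm \<Rightarrow> 'f trm"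
  and substts :: "'f trm list \<Rightarrow> nat \<Rightarrow> 'f trm \<Rightarrow> 'f trm list" where
  "substt (Var i) k s = (if i < k then Var i else if i = k then s else Var (i - 1))"
| "substt (Fn f ts) k s = Fn f (substts ts k s)"
| "substts [] k s = []"
| "substts (t # ts) k s = substt t k s # substts ts k s"

primrec substf :: "('f, 'p) fm \<Rightarrow> nat \<Rightarrow> 'f trm \<Rightarrow> ('f, 'p) fm" where
  "substf FF k s = FF"
| "substf (Pred p ts) k s = Pred p (substts ts k s)"
| "substf (Conj A B) k s = Conj (substf A k s) (substf B k s)"
| "substf (Disj A B) k s = Disj (substf A k s) (substf B k s)"
| "substf (Imp A B) k s = Imp (substf A k s) (substf B k s)"
| "substf (All A) k s = All (substf A (Suc k) (liftt s 0))"
| "substf (Ex A) k s = Ex (substf A (Suc k) (liftt s 0))"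

primrec fvt :: "'f trm \<Rightarrow> nat set"
  and fvts :: "'f trm list \<Rightarrow> nat set" where
  "fvt (Var i) = {i}"
| "fvt (Fn f ts) = fvts ts"
| "fvts [] = {}"
| "fvts (t # ts) = fvt t \<union> fvts ts"

primrec fvf :: "('f, 'p) fm \<Rightarrow> nat set" where
  "fvf FF = {}"
| "fvf (Pred p ts) = fvts ts"
| "fvf (Conj A B) = fvf A \<union> fvf B"
| "fvf (Disj A B) = fvf A \<union> fvf B"
| "fvf (Imp A B) = fvf A \<union> fvf B"
| "fvf (All A) = {i. Suc i \<in> fvf A}"
| "fvf (Ex A) = {i. Suc i \<in> fvf A}"

definition uclosure :: "('f, 'p) fm \<Rightarrow> ('f, 'p) fm" where
  "uclosure A = (All ^^ (if fvf A = {} then 0 else Suc (Max (fvf A)))) A"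

primrec preds :: "('f, 'p) fm \<Rightarrow> 'p set" where
  "preds FF = {}"
| "preds (Pred p ts) = {p}"
| "preds (Conj A B) = preds A \<union> preds B"
| "preds (Disj A B) = preds A \<union> preds B"
| "preds (Imp A B) = preds A \<union> preds B"
| "preds (All A) = preds A"
| "preds (Ex A) = preds A"

primrec noimp :: "('f, 'p) fm \<Rightarrow> bool" where
  "noimp FF = True"
| "noimp (Pred p ts) = True"
| "noimp (Conj A B) = (noimp A \<and> noimp B)"
| "noimp (Disj A B) = (noimp A \<and> noimp B)"
| "noimp (Imp A B) = False"
| "noimp (All A) = noimp A"
| "noimp (Ex A) = noimp A"

inductive ideriv :: "('f, 'p) fm list \<Rightarrow> ('f, 'p) fm \<Rightarrow> bool" (infix "\<turnstile>i" 50) where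
  Assum: "A \<in> set G \<Longrightarrow> G \<turnstile>i A"
| FFE: "G \<turnstile>i FF \<Longrightarrow> G \<turnstile>i A"
| ImpI: "A # G \<turnstile>i B \<Longrightarrow> G \<turnstile>i Imp A B"
| ImpE: "G \<turnstile>i Imp A B \<Longrightarrow> G \<turnstile>i A \<Longrightarrow> G \<turnstile>i B"
| ConjI: "G \<turnstile>i A \<Longrightarrow> G \<turnstile>i B \<Longrightarrow> G \<turnstile>i Conj A B"
| ConjE1: "G \<turnstile>i Conj A B \<Longrightarrow> G \<turnstile>i A"
| ConjE2: "G \<turnstile>i Conj A B \<Longrightarrow> G \<turnstile>i B"
| DisjI1: "G \<turnstile>i A \<Longrightarrow> G \<turnstile>i Disj A B"
| DisjI2: "G \<turnstile>i B \<Longrightarrow> G \<turnstile>i Disj A B"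
| DisjE: "G \<turnstile>i Disj A B \<Longrightarrow> A # G \<turnstile>i C \<Longrightarrow> B # G \<turnstile>i C \<Longrightarrow> G \<turnstile>i C"
| AllI: "map (\<lambda>F. liftf F 0) G \<turnstile>i A \<Longrightarrow> G \<turnstile>i All A"
| AllE: "G \<turnstile>i All A \<Longrightarrow> G \<turnstile>i substf A 0 t"
| ExI: "G \<turnstile>i substf A 0 t \<Longrightarrow> G \<turnstile>i Ex A"
| ExE: "G \<turnstile>i Ex A \<Longrightarrow> A # map (\<lambda>F. liftf F 0) G \<turnstile>i liftf C 0 \<Longrightarrow> G \<turnstile>i C"

datatype 'p ext = Orig 'p | Hat 'p

datatype ('f, 'p) lit = PosL 'p "'f trm list" | NegL 'p "'f trm list"

text \<open>An L-rule  L \<Leftarrow> G  is represented as the pair (L, G).\<close>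

definition is_Lrule ::
  "('p \<Rightarrow> nat) \<Rightarrow> 'p list \<Rightarrow> ('f, 'p) lit \<times> ('f, 'p ext) fm \<Rightarrow> bool" where
  "is_Lrule ar ps R = (case R of (L, G) \<Rightarrow>
     noimp G \<and> preds G \<subseteq> range Orig \<and>
     (case L of PosL p ts \<Rightarrow> p \<in> set ps \<and> length ts = ar p
              | NegL p ts \<Rightarrow> p \<in> set ps \<and> length ts = ar p))"

fun tr_l :: "('f, 'p) lit \<times> ('f, 'p ext) fm \<Rightarrow> ('f, 'p ext) fm" where
  "tr_l (PosL p ts, G) = uclosure (Imp (Neg (Neg G)) (Pred (Orig p) ts))"
| "tr_l (NegL p ts, G) = uclosure (Imp (Neg (Neg G)) (Pred (Hat p) ts))"

fun tr_d :: "('f, 'p) lit \<times> ('f, 'p ext) fm \<Rightarrow> ('f, 'p ext) fm" where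
  "tr_d (PosL p ts, G) = uclosure (Imp (Conj (Neg (Neg G))
        (Disj (Pred (Hat p) ts) (Neg (Pred (Hat p) ts)))) (Pred (Orig p) ts))"
| "tr_d (NegL p ts, G) = uclosure (Imp (Conj (Neg (Neg G))
        (Disj (Pred (Orig p) ts) (Neg (Pred (Orig p) ts)))) (Pred (Hat p) ts))"

definition CC1 :: "('p \<Rightarrow> nat) \<Rightarrow> 'p \<Rightarrow> ('f, 'p ext) fm" where
  "CC1 ar p = (let xs = map Var [0..<ar p] in
     Conj ((All ^^ ar p) (Neg (Conj (Pred (Orig p) xs) (Pred (Hat p) xs))))
          ((All ^^ ar p) (Neg (Conj (Neg (Pred (Orig p) xs)) (Neg (Pred (Hat p) xs))))))"

definition CC :: "('p \<Rightarrow> nat) \<Rightarrow> 'p list \<Rightarrow> ('f, 'p ext) fm" where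
  "CC ar ps = foldr (\<lambda>p A. Conj (CC1 ar p) A) ps TT"

end

theory Submission
  imports Defs
begin

lemma weaken: "G \<turnstile>i A \<Longrightarrow> set G \<subseteq> set G' \<Longrightarrow> G' \<turnstile>i A"
proof (induction arbitrary: G' rule: ideriv.induct)
  case (Assum A G) then show ?case by (auto intro: ideriv.Assum)
next
  case (FFE G A) then show ?case by (auto intro: ideriv.FFE)
next
  case (ImpI A G B)
  have "set (A # G) \<subseteq> set (A # G')" using ImpI.prems by auto
  then show ?case using ImpI.IH by (auto intro!: ideriv.ImpI)
next
  case (ImpE G A B) then show ?case by (meson ideriv.ImpE)
next
  case (ConjI G A B) then show ?case by (meson ideriv.ConjI)
next
  case (ConjE1 G A B) then show ?case by (meson ideriv.ConjE1)
next
  case (ConjE2 G A B) then show ?case by (meson ideriv.ConjE2)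
next
  case (DisjI1 G A B) then show ?case by (meson ideriv.DisjI1)
next
  case (DisjI2 G B A) then show ?case by (meson ideriv.DisjI2)
next
  case (DisjE G A B C) then show ?case
    by (metis ideriv.DisjE set_subset_Cons subset_trans insert_mono list.simps(15))
next
  case (AllI G A)
  have "set (map (\<lambda>F. liftf F 0) G) \<subseteq> set (map (\<lambda>F. liftf F 0) G')" using AllI.prems by auto
  then show ?case using AllI.IH by (auto intro!: ideriv.AllI)
next
  case (AllE G A t) then show ?case by (meson ideriv.AllE)
next
  case (ExI G A t) then show ?case by (meson ideriv.ExI)
next
  case (ExE G A C)
  have "set (A # map (\<lambda>F. liftf F 0) G) \<subseteq> set (A # map (\<lambda>F. liftf F 0) G')"
    using ExE.prems by auto
  then show ?case using ExE ideriv.ExE by metis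
qed

lemma cut: "G \<turnstile>i A \<Longrightarrow> A # G \<turnstile>i B \<Longrightarrow> G \<turnstile>i B"
  by (meson ideriv.ImpE ideriv.ImpI)

lemma liftts_map: "liftts ts k = map (\<lambda>t. liftt t k) ts"
  by (induction ts) auto
lemma substts_map: "substts ts k s = map (\<lambda>t. substt t k s) ts"
  by (induction ts) auto

lemma subst_lift_t1: "substt (liftt t (Suc k)) k (Var k) = t"
  by (induction t) (auto simp: liftts_map substts_map map_idI)

lemma subst_lift_t: "substt (liftt t (Suc k)) k (Var k) = t" "substts (liftts ts (Suc k)) k (Var k) = ts"
  by (auto simp: subst_lift_t1 liftts_map substts_map map_idI)

lemma subst_lift_f: "substf (liftf A (Suc k)) k (Var k) = A"
  by (induction A arbitrary: k) (auto simp: subst_lift_t)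

lemma allmono1:
  assumes "A # map (\<lambda>F. liftf F 0) G \<turnstile>i B"
  shows "G \<turnstile>i Imp (All A) (All B)"
proof -
  let ?G = "All (liftf A 1) # map (\<lambda>F. liftf F 0) G"
  have "?G \<turnstile>i All (liftf A 1)" by (auto intro: ideriv.Assum)
  then have "?G \<turnstile>i substf (liftf A 1) 0 (Var 0)" by (rule ideriv.AllE)
  then have a: "?G \<turnstile>i A" using subst_lift_f[of A 0] by simp
  have "A # ?G \<turnstile>i B" using assms by (rule weaken) auto
  then have "?G \<turnstile>i B" using a cut by blast
  then have "All A # G \<turnstile>i All B" by (intro ideriv.AllI) simp
  then show ?thesis by (rule ideriv.ImpI)
qed

lemma allmono:
  assumes inv: "map (\<lambda>F. liftf F 0) G = G" and d: "A # G \<turnstile>i B"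
  shows "G \<turnstile>i Imp ((All ^^ n) A) ((All ^^ n) B)"
proof (induction n)
  case 0 then show ?case using d by (simp add: ideriv.ImpI)
next
  case (Suc n)
  have "(All ^^ n) A # G \<turnstile>i (All ^^ n) B"
    using Suc weaken[of G _ "(All ^^ n) A # G"] ideriv.ImpE ideriv.Assum
    by (metis list.set_intros(1) set_subset_Cons)
  then have "(All ^^ n) A # map (\<lambda>F. liftf F 0) G \<turnstile>i (All ^^ n) B" using inv by simp
  then show ?case using allmono1 by simp
qed


lemma liftt_map1: "liftt (Fn f ts) k = Fn f (map (\<lambda>t. liftt t k) ts)"
  by (simp add: liftts_map)
lemma substt_map1: "substt (Fn f ts) k s = Fn f (map (\<lambda>t. substt t k s) ts)"
  by (simp add: substts_map)

lemma subst_lift_gen: "substt (liftt t k) k u = t"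
  by (induction t) (auto simp: liftts_map substts_map map_idI)

lemma lift_lift: "i \<le> j \<Longrightarrow> liftt (liftt t j) i = liftt (liftt t i) (Suc j)"
  by (induction t) (auto simp: liftts_map)

definition L :: "nat \<Rightarrow> 'f trm \<Rightarrow> 'f trm" where
  "L j s = ((\<lambda>t. liftt t 0) ^^ j) s"

lemma L_Suc: "L (Suc j) s = liftt (L j s) 0" by (simp add: L_def)
lemma L_Suc': "L j (liftt s 0) = L (Suc j) s" by (simp add: L_def funpow_Suc_right del: funpow.simps)
lemma L_0: "L 0 s = s" by (simp add: L_def)

lemma L_lift: "k \<le> j \<Longrightarrow> L (Suc j) s = liftt (L j s) k"
proof (induction j arbitrary: k)
  case 0 then show ?case by (simp add: L_Suc)
next
  case (Suc j)
  show ?case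
  proof (cases k)
    case 0 then show ?thesis by (simp add: L_Suc)
  next
    case (Suc k')
    then have k': "k' \<le> j" using Suc.prems by simp
    have "L (Suc (Suc j)) s = liftt (liftt (L j s) 0) 0" by (simp add: L_Suc)
    also have "\<dots> = liftt (liftt (L j s) k') 0" using Suc.IH[OF k'] Suc.IH[of 0] by (simp add: L_Suc)
    also have "\<dots> = liftt (liftt (L j s) 0) (Suc k')" by (rule lift_lift) simp
    finally show ?thesis using Suc by (simp add: L_Suc)
  qed
qed

lemma subst_L: "k \<le> j \<Longrightarrow> substt (L (Suc j) s) k u = L j s"
  using L_lift subst_lift_gen by metis

lemma substf_Alls: "substf ((All ^^ j) X) k s = (All ^^ j) (substf X (k + j) (L j s))"
proof (induction j arbitrary: k s)
  case 0 then show ?case by (simp add: L_0)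
next
  case (Suc j)
  show ?case using Suc[of "Suc k" "liftt s 0"] by (simp add: L_Suc')
qed

lemma liftf_Alls: "liftf ((All ^^ j) X) k = (All ^^ j) (liftf X (k + j))"
  by (induction j arbitrary: k) auto

definition Phi :: "'p \<Rightarrow> 'f trm list \<Rightarrow> ('f, 'p ext) fm" where
  "Phi p us = Neg (Conj (Pred (Orig p) us) (Pred (Hat p) us))"

lemma substf_Phi: "substf (Phi p us) k s = Phi p (substts us k s)"
  by (simp add: Phi_def Neg_def)

definition sig :: "'f trm list \<Rightarrow> nat \<Rightarrow> nat \<Rightarrow> 'f trm" where
  "sig ts j i = (if i < j then Var i else L j (ts ! i))"

lemma inst:
  assumes g: "G \<turnstile>i (All ^^ m) (Phi p (map Var [0..<m]))" and len: "length ts = m"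
  shows "G \<turnstile>i Phi p ts"
proof -
  have "G \<turnstile>i (All ^^ j) (Phi p (map (sig ts j) [0..<m]))" if "j \<le> m" for j
    using that
  proof (induction j rule: inc_induct)
    case base
    have "map (sig ts m) [0..<m] = map Var [0..<m]" by (auto simp: sig_def)
    then show ?case using g by metis
  next
    case (step n)
    have "G \<turnstile>i All ((All ^^ n) (Phi p (map (sig ts (Suc n)) [0..<m])))"
      using step.IH by simp
    then have "G \<turnstile>i substf ((All ^^ n) (Phi p (map (sig ts (Suc n)) [0..<m]))) 0 (ts ! n)"
      by (rule ideriv.AllE)
    moreover have eq: "map (\<lambda>i. substt (sig ts (Suc n) i) n (L n (ts ! n))) [0..<m]
        = map (sig ts n) [0..<m]"
      by (auto simp: sig_def subst_L less_Suc_eq)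
    ultimately show ?case by (simp add: substf_Alls substf_Phi substts_map comp_def)
  qed
  from this[of 0] have "G \<turnstile>i Phi p (map (sig ts 0) [0..<m])" by simp
  moreover have "map (sig ts 0) [0..<m] = ts" using len
    by (metis (no_types, lifting) L_0 map_cong map_nth not_less_zero sig_def atLeastLessThan_iff set_upt)
  ultimately show ?thesis by simp
qed

lemma CC_get: "G \<turnstile>i CC ar ps \<Longrightarrow> p \<in> set ps \<Longrightarrow> G \<turnstile>i CC1 ar p"
proof (induction ps)
  case Nil then show ?case by simp
next
  case (Cons q ps)
  then have c: "G \<turnstile>i Conj (CC1 ar q) (CC ar ps)" by (simp add: CC_def)
  show ?case
  proof (cases "p = q")
    case True then show ?thesis using ideriv.ConjE1[OF c] by simp
  next
    case False then show ?thesis using Cons ideriv.ConjE2[OF c] by simp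
  qed
qed

lemma CC_Phi: "G \<turnstile>i CC ar ps \<Longrightarrow> p \<in> set ps \<Longrightarrow> length ts = ar p \<Longrightarrow> G \<turnstile>i Phi p ts"
  apply (rule inst[where m = "ar p"])
   apply (drule (1) CC_get)
   apply (unfold CC1_def Let_def Phi_def)
   apply (erule ideriv.ConjE1)
  apply simp
  done

lemma liftts_Vars: "liftts (map Var [0..<m]) m = map Var [0..<m]"
  by (simp add: liftts_map; rule map_idI; auto)

lemma CC_closed: "liftf (CC ar ps) 0 = CC ar ps"
proof (induction ps)
  case Nil then show ?case by (simp add: CC_def TT_def)
next
  case (Cons q ps)
  have "liftf (CC1 ar q) 0 = CC1 ar q"
    by (simp add: CC1_def Let_def liftf_Alls Neg_def liftts_Vars del: liftts.simps)
  then show ?case using Cons by (simp add: CC_def)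
qed

lemma A: "A \<in> set G \<Longrightarrow> G \<turnstile>i A" by (rule ideriv.Assum)

lemma iff_alls:
  assumes "[A, C] \<turnstile>i B" "[B, C] \<turnstile>i A" "liftf C 0 = C"
  shows "[C] \<turnstile>i Iff ((All ^^ n) A) ((All ^^ n) B)"
  unfolding Iff_def
  by (rule ideriv.ConjI; rule allmono) (use assms in auto)

theorem lemma10:
  fixes ar :: "'p \<Rightarrow> nat" and ps :: "'p list"
    and R :: "('f, 'p) lit \<times> ('f, 'p ext) fm"
  assumes "is_Lrule ar ps R"
  shows "[CC ar ps] \<turnstile>i Iff (tr_l R) (tr_d R)"
proof -
  obtain Lt G where R: "R = (Lt, G)" by (cases R)
  let ?C = "CC ar ps"
  let ?NNG = "Neg (Neg G)"
  show ?thesis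
  proof (cases Lt)
    case (PosL p ts)
    let ?P = "Pred (Orig p) ts" and ?H = "Pred (Hat p) ts"
    have pin: "p \<in> set ps" and len: "length ts = ar p" using assms R PosL by (auto simp: is_Lrule_def)
    let ?Lb = "Imp ?NNG ?P" and ?Db = "Imp (Conj ?NNG (Disj ?H (Neg ?H))) ?P"
    have fv: "fvf ?Db = fvf ?Lb" by (auto simp: Neg_def)
    have d1: "[?Lb, ?C] \<turnstile>i ?Db"
      apply (rule ideriv.ImpI)
      apply (rule ideriv.ImpE[where A = ?NNG])
       apply (rule A; simp)
      apply (rule ideriv.ConjE1[where B = "Disj ?H (Neg ?H)"], rule A, simp)
      done
    have d2: "[?Db, ?C] \<turnstile>i ?Lb"
    proof (rule ideriv.ImpI)
      let ?G3 = "[?NNG, ?Db, ?C]"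
      have "?G3 \<turnstile>i Imp ?H FF"
      proof (rule ideriv.ImpI)
        let ?G4 = "?H # ?G3"
        have c: "?G4 \<turnstile>i Conj ?NNG (Disj ?H (Neg ?H))"
          by (rule ideriv.ConjI, rule A, simp, rule ideriv.DisjI1, rule A, simp)
        have p: "?G4 \<turnstile>i ?P" by (rule ideriv.ImpE[OF _ c], rule A, simp)
        have ph: "?G4 \<turnstile>i Phi p ts" by (rule CC_Phi[of _ ar ps p ts, OF _ pin len], rule A, simp)
        show "?G4 \<turnstile>i FF"
          using ph p unfolding Phi_def Neg_def
          by (meson A ideriv.ConjI ideriv.ImpE list.set_intros(1))
      qed
      then have "?G3 \<turnstile>i Neg ?H" unfolding Neg_def .
      then have "?G3 \<turnstile>i Conj ?NNG (Disj ?H (Neg ?H))"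
        by (intro ideriv.ConjI ideriv.DisjI2) (rule A, simp)
      then show "?G3 \<turnstile>i ?P" by (meson ideriv.ImpE A list.set_intros)
    qed
    show ?thesis unfolding R PosL tr_l.simps tr_d.simps uclosure_def fv
      by (rule iff_alls[OF d1 d2 CC_closed])
  next
    case (NegL p ts)
    let ?P = "Pred (Orig p) ts" and ?H = "Pred (Hat p) ts"
    have pin: "p \<in> set ps" and len: "length ts = ar p" using assms R NegL by (auto simp: is_Lrule_def)
    let ?Lb = "Imp ?NNG ?H" and ?Db = "Imp (Conj ?NNG (Disj ?P (Neg ?P))) ?H"
    have fv: "fvf ?Db = fvf ?Lb" by (auto simp: Neg_def)
    have d1: "[?Lb, ?C] \<turnstile>i ?Db"
      apply (rule ideriv.ImpI)
      apply (rule ideriv.ImpE[where A = ?NNG])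
       apply (rule A; simp)
      apply (rule ideriv.ConjE1[where B = "Disj ?P (Neg ?P)"], rule A, simp)
      done
    have d2: "[?Db, ?C] \<turnstile>i ?Lb"
    proof (rule ideriv.ImpI)
      let ?G3 = "[?NNG, ?Db, ?C]"
      have "?G3 \<turnstile>i Imp ?P FF"
      proof (rule ideriv.ImpI)
        let ?G4 = "?P # ?G3"
        have c: "?G4 \<turnstile>i Conj ?NNG (Disj ?P (Neg ?P))"
          by (rule ideriv.ConjI, rule A, simp, rule ideriv.DisjI1, rule A, simp)
        have h: "?G4 \<turnstile>i ?H" by (rule ideriv.ImpE[OF _ c], rule A, simp)
        have ph: "?G4 \<turnstile>i Phi p ts" by (rule CC_Phi[of _ ar ps p ts, OF _ pin len], rule A, simp)
        show "?G4 \<turnstile>i FF"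
          using ph h unfolding Phi_def Neg_def
          by (meson A ideriv.ConjI ideriv.ImpE list.set_intros(1))
      qed
      then have "?G3 \<turnstile>i Neg ?P" unfolding Neg_def .
      then have "?G3 \<turnstile>i Conj ?NNG (Disj ?P (Neg ?P))"
        by (intro ideriv.ConjI ideriv.DisjI2) (rule A, simp)
      then show "?G3 \<turnstile>i ?H" by (meson ideriv.ImpE A list.set_intros)
    qed
    show ?thesis unfolding R NegL tr_l.simps tr_d.simps uclosure_def fv
      by (rule iff_alls[OF d1 d2 CC_closed])
  qed
qed

end
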